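(* Let $k$ be a positive integer and let $(X,Y)$ be a partition of $\{1,2,\dots,n\}$ into two sets. Call a pair $(a,b)$ bad if $a<b$, $a\in Y$ and $b\in X$. Assume that for every integer $t$ there are at most $k$ bad pairs $(a,b)$ with $a\le t<b$. Then the total number of bad pairs is at most $k(1+\ln k)$. *)

theory Defs
  imports Complex_Main
begin

definition bad_pairs :: "nat set \<Rightarrow> nat set \<Rightarrow> (nat \<times> nat) set" where
  "bad_pairs X Y = {(a, b). a < b \<and> a \<in> Y \<and> b \<in> X}"

end

theory Submission
  imports Defs
begin

lemma harm_bound: "k \<ge> 1 \<Longrightarrow> (\<Sum>i=1..k. 1 / real i) \<le> 1 + ln (real k)"
proof (induction k rule: dec_induct)
  case base then show ?case by simp
next
  case (step m)
  have m: "real m \<ge> 1" using step by simp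
  have "ln (real m / real (Suc m)) \<le> real m / real (Suc m) - 1"
    by (rule ln_le_minus_one) (use m in simp)
  also have "\<dots> = - 1 / real (Suc m)" by (simp add: field_simps)
  finally have "1 / real (Suc m) \<le> ln (real (Suc m)) - ln (real m)"
    using m by (simp add: ln_div)
  then show ?case using step by simp
qed

theorem mainTheorem10:
  fixes k n :: nat and X Y :: "nat set"
  assumes "k > 0"
    and "X \<union> Y = {1..n}" and "X \<inter> Y = {}"
    and "\<And>t::int. card {(a, b) \<in> bad_pairs X Y. int a \<le> t \<and> t < int b} \<le> k"
  shows "real (card (bad_pairs X Y)) \<le> real k * (1 + ln (real k))"
proof -
  have finX: "finite X" and finY: "finite Y" using assms(2)
    by (metis finite_Un finite_atLeastAtMost)+
  define y where "y b = card {a\<in>Y. a < b}" for b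
  define c where "c b = card {b'\<in>X. b \<le> b'}" for b
  have bp: "bad_pairs X Y = (\<lambda>(b,a). (a,b)) ` Sigma X (\<lambda>b. {a\<in>Y. a<b})"
    unfolding bad_pairs_def by (auto simp: image_iff)
  have "card (bad_pairs X Y) = card (Sigma X (\<lambda>b. {a\<in>Y. a<b}))"
    unfolding bp by (rule card_image) (auto simp: inj_on_def)
  also have "\<dots> = (\<Sum>b\<in>X. y b)"
    unfolding y_def using finX finY by (simp add: card_SigmaI)
  finally have tot: "card (bad_pairs X Y) = (\<Sum>b\<in>X. y b)" .
  have cross: "y b * c b \<le> k" if "b \<in> X" for b
  proof -
    have "{(a, b') \<in> bad_pairs X Y. int a \<le> int b - 1 \<and> int b - 1 < int b'}
        = {a\<in>Y. a < b} \<times> {b'\<in>X. b \<le> b'}"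
      unfolding bad_pairs_def by auto
    then have "card ({a\<in>Y. a < b} \<times> {b'\<in>X. b \<le> b'}) \<le> k"
      using assms(4)[of "int b - 1"] by simp
    then show ?thesis unfolding y_def c_def by (simp add: card_cartesian_product)
  qed
  have cpos: "c b \<ge> 1" if "b \<in> X" for b
  proof -
    have "b \<in> {b'\<in>X. b \<le> b'}" using that by simp
    then show ?thesis unfolding c_def using finX
      by (metis (no_types, lifting) One_nat_def Suc_leI card_gt_0_iff empty_iff finite_subset mem_Collect_eq subsetI)
  qed
  have cinj: "inj_on c X"
  proof (rule inj_onI, rule ccontr)
    fix b b' assume bX: "b \<in> X" "b' \<in> X" "c b = c b'" "b \<noteq> b'"
    have lt: "c u < c v" if "u \<in> X" "v \<in> X" "v < u" for u v
    proof -
      have "v \<in> {b'\<in>X. v \<le> b'}" "v \<notin> {b'\<in>X. u \<le> b'}" using that by auto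
      have "{b'\<in>X. u \<le> b'} \<subset> {b'\<in>X. v \<le> b'}" proof -
        have "{b'\<in>X. u \<le> b'} \<subseteq> {b'\<in>X. v \<le> b'}" using that by auto
        then show ?thesis using \<open>v \<in> {b'\<in>X. v \<le> b'}\<close> \<open>v \<notin> {b'\<in>X. u \<le> b'}\<close> by blast
      qed
      then show ?thesis unfolding c_def using finX
        by (intro psubset_card_mono) (use finX in auto)
    qed
    show False using bX lt[of b b'] lt[of b' b] by (cases "b < b'") auto
  qed
  define f where "f i = (if 1 \<le> i \<and> i \<le> k then real k / real i else 0)" for i :: nat
  have yle: "real (y b) \<le> f (c b)" if "b \<in> X" for b
  proof (cases "c b \<le> k")
    case True
    have "real (y b) * real (c b) \<le> real k" using cross[OF that] by (metis of_nat_le_iff of_nat_mult)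
    then show ?thesis using True cpos[OF that] unfolding f_def by (simp add: field_simps)
  next
    case False
    have "y b = 0"
    proof (rule ccontr)
      assume "y b \<noteq> 0"
      then have "c b \<le> y b * c b" by simp
      then show False using cross[OF that] False by linarith
    qed
    then show ?thesis unfolding f_def by simp
  qed
  have fnn: "f i \<ge> 0" for i unfolding f_def by simp
  have "real (card (bad_pairs X Y)) = (\<Sum>b\<in>X. real (y b))" by (simp add: tot)
  also have "\<dots> \<le> (\<Sum>b\<in>X. f (c b))" by (rule sum_mono) (rule yle)
  also have "\<dots> = (\<Sum>i\<in>c ` X. f i)" using sum.reindex[OF cinj, of f] by simp
  also have "\<dots> \<le> (\<Sum>i\<in>c ` X \<union> {1..k}. f i)"
    by (rule sum_mono2) (use finX fnn in auto)
  also have "\<dots> = (\<Sum>i\<in>{1..k}. f i)"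
    by (rule sum.mono_neutral_right) (use finX in \<open>auto simp: f_def\<close>)
  also have "\<dots> = real k * (\<Sum>i=1..k. 1 / real i)"
    unfolding f_def by (simp add: sum_distrib_left)
  also have "\<dots> \<le> real k * (1 + ln (real k))"
    using harm_bound[of k] assms(1) by (intro mult_left_mono) auto
  finally show ?thesis .
qed

end
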